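(* For a digraph $X$ the following are equivalent: (a) every eigenvalue of $H(X)$ lies in $(-\sqrt{2},\sqrt{2})$; (b) every eigenvalue of $H(X)$ lies in $[-1,1]$; (c) every weakly connected component of $X$ is a single arc, a digon, or an isolated vertex.
   Context: A digraph $X$ has a finite vertex set and an arc set of ordered pairs of distinct vertices; $\{x,y\}$ is a digon if both $xy,yx$ are arcs. The underlying graph $\Gamma(X)$ is the simple graph with an edge $\{x,y\}$ whenever $xy$ or $yx$ is an arc; weakly connected components of $X$ are the sub-digraphs induced on components of $\Gamma(X)$. The Hermitian adjacency matrix $H(X)$ has $(u,v)$-entry $1$ if $uv$ and $vu$ are arcs, $i$ if only $uv$ is an arc, $-i$ if only $vu$ is an arc, and $0$ otherwise. *)

theory Defs
  imports Complex_Main "Jordan_Normal_Form.Char_Poly"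
begin

definition digraph :: "nat \<Rightarrow> (nat \<times> nat) set \<Rightarrow> bool" where
  "digraph n A \<longleftrightarrow> A \<subseteq> {0..<n} \<times> {0..<n} \<and> (\<forall>x. (x, x) \<notin> A)"

definition herm_adj :: "nat \<Rightarrow> (nat \<times> nat) set \<Rightarrow> complex mat" where
  "herm_adj n A = mat n n (\<lambda>(u, v).
     if (u, v) \<in> A \<and> (v, u) \<in> A then 1
     else if (u, v) \<in> A then \<i>
     else if (v, u) \<in> A then - \<i>
     else 0)"

definition underlying_edges :: "(nat \<times> nat) set \<Rightarrow> (nat \<times> nat) set" where
  "underlying_edges A = A \<union> A\<inverse>"

definition weak_components :: "nat \<Rightarrow> (nat \<times> nat) set \<Rightarrow> nat set set" where
  "weak_components n A =
     (\<lambda>v. {w \<in> {0..<n}. (v, w) \<in> (underlying_edges A)\<^sup>*}) ` {0..<n}"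

definition induced_arcs :: "(nat \<times> nat) set \<Rightarrow> nat set \<Rightarrow> (nat \<times> nat) set" where
  "induced_arcs A C = A \<inter> (C \<times> C)"

definition single_arc_or_digon_or_isolated :: "nat set \<Rightarrow> (nat \<times> nat) set \<Rightarrow> bool" where
  "single_arc_or_digon_or_isolated C B \<longleftrightarrow>
     (\<exists>x. C = {x} \<and> B = {}) \<or>
     (\<exists>x y. x \<noteq> y \<and> C = {x, y} \<and> B = {(x, y)}) \<or>
     (\<exists>x y. x \<noteq> y \<and> C = {x, y} \<and> B = {(x, y), (y, x)})"

end

theory Submission imports Defs "Jordan_Normal_Form.Spectral_Radius" begin

lemma pow_mat_add:
  assumes "M \<in> carrier_mat n n"
  shows "M ^\<^sub>m (a + b) = M ^\<^sub>m a * M ^\<^sub>m b"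
proof (induct b)
  case 0 then show ?case using assms by simp
next
  case (Suc b)
  have "M ^\<^sub>m (a + Suc b) = M ^\<^sub>m (a + b) * M" by simp
  also have "\<dots> = (M ^\<^sub>m a * M ^\<^sub>m b) * M" using Suc by simp
  also have "\<dots> = M ^\<^sub>m a * (M ^\<^sub>m b * M)"
    using assms by (intro assoc_mult_mat[of _ n n _ n _ n]) auto
  finally show ?case by simp
qed

lemma cscalar_sum:
  assumes "u \<in> carrier_vec n" "v \<in> carrier_vec n"
  shows "u \<bullet>c v = (\<Sum>i<n. u $ i * cnj (v $ i))"
  using assms unfolding scalar_prod_def by (auto intro!: sum.cong)

lemma mult_mat_vec_sum:
  assumes "M \<in> carrier_mat n n" "u \<in> carrier_vec n" "i < n"
  shows "(M *\<^sub>v u) $ i = (\<Sum>j<n. M $$ (i,j) * u $ j)"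
  using assms by (auto simp: scalar_prod_def atLeast0LessThan intro!: sum.cong)

lemma herm_adjoint:
  assumes H: "H \<in> carrier_mat n n"
    and herm: "\<And>i j. i < n \<Longrightarrow> j < n \<Longrightarrow> H $$ (i,j) = cnj (H $$ (j,i))"
    and u: "u \<in> carrier_vec n" and v: "v \<in> carrier_vec n"
  shows "(H *\<^sub>v u) \<bullet>c v = u \<bullet>c (H *\<^sub>v v)"
proof -
  have "(H *\<^sub>v u) \<bullet>c v = (\<Sum>i<n. (H *\<^sub>v u) $ i * cnj (v$i))"
    using H u v by (intro cscalar_sum) auto
  also have "\<dots> = (\<Sum>i<n. (\<Sum>j<n. H$$(i,j) * u$j) * cnj (v$i))"
    using H u v by (intro sum.cong refl, subst mult_mat_vec_sum[OF H u]) auto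
  also have "\<dots> = (\<Sum>i<n. \<Sum>j<n. H$$(i,j) * u$j * cnj (v$i))"
    by (simp add: sum_distrib_right)
  also have "\<dots> = (\<Sum>j<n. \<Sum>i<n. H$$(i,j) * u$j * cnj (v$i))"
    by (rule sum.swap)
  also have "\<dots> = (\<Sum>j<n. u$j * cnj (\<Sum>i<n. H$$(j,i) * v$i))"
    by (auto simp: sum_distrib_left herm[symmetric] mult.commute mult.left_commute intro!: sum.cong)
  also have "\<dots> = (\<Sum>j<n. u$j * cnj ((H *\<^sub>v v) $ j))"
    using H u v by (intro sum.cong refl, subst mult_mat_vec_sum[OF H v]) auto
  also have "\<dots> = u \<bullet>c (H *\<^sub>v v)"
    using H u v by (intro cscalar_sum[symmetric]) auto
  finally show ?thesis .
qed

lemma herm_adjoint_pow: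
  assumes H: "H \<in> carrier_mat n n"
    and herm: "\<And>i j. i < n \<Longrightarrow> j < n \<Longrightarrow> H $$ (i,j) = cnj (H $$ (j,i))"
    and u: "u \<in> carrier_vec n" and v: "v \<in> carrier_vec n"
  shows "(H ^\<^sub>m k *\<^sub>v u) \<bullet>c v = u \<bullet>c (H ^\<^sub>m k *\<^sub>v v)"
  using u v
proof (induct k arbitrary: u v)
  case 0 then show ?case using H by simp
next
  case (Suc k)
  have e1: "H ^\<^sub>m Suc k = H ^\<^sub>m k * H" by simp
  have e2: "H ^\<^sub>m Suc k = H * H ^\<^sub>m k"
    using pow_mat_add[OF H, of 1 k] H by simp
  have "(H ^\<^sub>m Suc k *\<^sub>v u) \<bullet>c v = (H ^\<^sub>m k *\<^sub>v (H *\<^sub>v u)) \<bullet>c v"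
    unfolding e1 using H Suc by (subst assoc_mult_mat_vec[of _ n n _ n]) auto
  also have "\<dots> = (H *\<^sub>v u) \<bullet>c (H ^\<^sub>m k *\<^sub>v v)"
    using Suc H by (intro Suc.hyps) (use mult_mat_vec_carrier[OF pow_carrier_mat[OF H]] in auto)
  also have "\<dots> = u \<bullet>c (H *\<^sub>v (H ^\<^sub>m k *\<^sub>v v))"
    using Suc H by (intro herm_adjoint[OF H herm]) (use mult_mat_vec_carrier[OF pow_carrier_mat[OF H]] in auto)
  also have "H *\<^sub>v (H ^\<^sub>m k *\<^sub>v v) = H ^\<^sub>m Suc k *\<^sub>v v"
    unfolding e2 using H Suc by (subst assoc_mult_mat_vec[of _ n n _ n]) auto
  finally show ?case .
qed

lemma real_CS:
  fixes a b :: "nat \<Rightarrow> real"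
  assumes "finite I"
  shows "(\<Sum>i\<in>I. a i * b i)\<^sup>2 \<le> (\<Sum>i\<in>I. (a i)\<^sup>2) * (\<Sum>i\<in>I. (b i)\<^sup>2)"
proof (cases "(\<Sum>i\<in>I. (b i)\<^sup>2) > 0")
  case False
  then have "\<And>i. i\<in>I \<Longrightarrow> b i = 0"
    using assms sum_nonneg_eq_0_iff[of I "\<lambda>i. (b i)\<^sup>2"] by (smt (verit) power2_less_eq_zero_iff sum_nonneg zero_le_power2)
  thus ?thesis by simp
next
  case True
  define S where "S = (\<Sum>i\<in>I. a i * b i)"
  define B where "B = (\<Sum>i\<in>I. (b i)\<^sup>2)"
  define A where "A = (\<Sum>i\<in>I. (a i)\<^sup>2)"
  define r where "r = S / B"
  have Bpos: "B > 0" using True B_def by simp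
  have e: "\<And>i. (a i - r * b i)\<^sup>2 = (a i)\<^sup>2 - 2 * r * (a i * b i) + r\<^sup>2 * (b i)\<^sup>2"
    by (simp add: power2_eq_square algebra_simps)
  have "0 \<le> (\<Sum>i\<in>I. (a i - r * b i)\<^sup>2)"
    by (simp add: sum_nonneg)
  also have "\<dots> = A - 2 * r * S + r\<^sup>2 * B"
    unfolding e sum.distrib sum_subtractf sum_distrib_left[symmetric] A_def B_def S_def by simp
  also have "2 * r * S = 2 * (S\<^sup>2 / B)" unfolding r_def by (simp add: power2_eq_square)
  also have "r\<^sup>2 * B = S\<^sup>2 / B" unfolding r_def using Bpos by (simp add: power2_eq_square)
  finally have "S\<^sup>2 / B \<le> A" by simp
  then have "S\<^sup>2 \<le> A * B" using Bpos by (simp add: pos_divide_le_eq)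
  then show ?thesis unfolding S_def A_def B_def .
qed

lemma cscalar_self:
  assumes "y \<in> carrier_vec n"
  shows "y \<bullet>c y = complex_of_real (\<Sum>i<n. (cmod (y $ i))\<^sup>2)"
proof -
  have "\<And>z::complex. z * cnj z = complex_of_real ((cmod z)\<^sup>2)"
    by (rule complex_norm_square[symmetric])
  then show ?thesis
    unfolding cscalar_sum[OF assms assms] of_real_sum by simp
qed

lemma complex_CS:
  assumes "y \<in> carrier_vec n" "x \<in> carrier_vec n"
  shows "(cmod (y \<bullet>c x))\<^sup>2 \<le> (\<Sum>i<n. (cmod (y $ i))\<^sup>2) * (\<Sum>i<n. (cmod (x $ i))\<^sup>2)"
proof -
  have "cmod (y \<bullet>c x) \<le> (\<Sum>i<n. cmod (y $ i) * cmod (x $ i))"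
    unfolding cscalar_sum[OF assms]
    by (rule order.trans[OF norm_sum]) (simp add: norm_mult)
  then have "(cmod (y \<bullet>c x))\<^sup>2 \<le> (\<Sum>i<n. cmod (y $ i) * cmod (x $ i))\<^sup>2"
    by (simp add: power_mono)
  also have "\<dots> \<le> (\<Sum>i<n. (cmod (y $ i))\<^sup>2) * (\<Sum>i<n. (cmod (x $ i))\<^sup>2)"
    by (rule real_CS) simp
  finally show ?thesis .
qed

lemma smult_mat_vec:
  fixes M :: "complex mat"
  assumes "M \<in> carrier_mat n n" "v \<in> carrier_vec n"
  shows "(a \<cdot>\<^sub>m M) *\<^sub>v v = a \<cdot>\<^sub>v (M *\<^sub>v v)"
proof (rule eq_vecI)
  fix i assume "i < dim_vec (a \<cdot>\<^sub>v (M *\<^sub>v v))"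
  then have i: "i < n" using assms by simp
  have "((a \<cdot>\<^sub>m M) *\<^sub>v v) $ i = (\<Sum>j<n. (a \<cdot>\<^sub>m M) $$ (i,j) * v $ j)"
    by (rule mult_mat_vec_sum) (use assms i in auto)
  also have "\<dots> = a * (\<Sum>j<n. M $$ (i,j) * v $ j)"
    using assms i by (auto simp: sum_distrib_left mult.assoc intro!: sum.cong)
  also have "\<dots> = (a \<cdot>\<^sub>v (M *\<^sub>v v)) $ i"
    using assms i by (subst index_smult_vec) (auto simp: mult_mat_vec_sum simp del: index_mult_mat_vec)
  finally show "((a \<cdot>\<^sub>m M) *\<^sub>v v) $ i = (a \<cdot>\<^sub>v (M *\<^sub>v v)) $ i" .
qed (use assms in auto)

lemma smult_pow_mat:
  fixes M :: "complex mat"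
  assumes M: "M \<in> carrier_mat n n"
  shows "(a \<cdot>\<^sub>m M) ^\<^sub>m k = a^k \<cdot>\<^sub>m (M ^\<^sub>m k)"
proof (induct k)
  case 0 then show ?case using M by (intro eq_matI) auto
next
  case (Suc k)
  have "(a \<cdot>\<^sub>m M) ^\<^sub>m Suc k = (a^k \<cdot>\<^sub>m (M ^\<^sub>m k)) * (a \<cdot>\<^sub>m M)" using Suc by simp
  also have "\<dots> = a^k \<cdot>\<^sub>m ((M ^\<^sub>m k) * (a \<cdot>\<^sub>m M))"
    by (rule mult_smult_assoc_mat) (use M in auto)
  also have "(M ^\<^sub>m k) * (a \<cdot>\<^sub>m M) = a \<cdot>\<^sub>m ((M ^\<^sub>m k) * M)"
    by (rule mult_smult_distrib) (use M in auto)
  also have "a^k \<cdot>\<^sub>m (a \<cdot>\<^sub>m ((M ^\<^sub>m k) * M)) = a^Suc k \<cdot>\<^sub>m (M ^\<^sub>m Suc k)"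
    using M by (intro eq_matI) (auto simp: mult.assoc)
  finally show ?case .
qed


lemma power_growth_lower:
  fixes H :: "complex mat"
  assumes H: "H \<in> carrier_mat n n"
    and herm: "\<And>i j. i < n \<Longrightarrow> j < n \<Longrightarrow> H $$ (i,j) = cnj (H $$ (j,i))"
    and x: "x \<in> carrier_vec n"
    and S0: "S0 = (\<Sum>i<n. (cmod (x $ i))\<^sup>2)" "S0 > 0"
    and base: "cmod ((H *\<^sub>v x) \<bullet>c x) \<ge> sqrt 2 * S0"
  shows "cmod ((H ^\<^sub>m (2^j) *\<^sub>v x) \<bullet>c x) \<ge> sqrt 2 ^ (2^j) * S0"
proof (induct j)
  case 0
  have "H ^\<^sub>m 1 = H" using H by simp
  then show ?case using base by simp
next
  case (Suc j)
  define m :: nat where "m = 2^j"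
  define y where "y = H ^\<^sub>m m *\<^sub>v x"
  have y: "y \<in> carrier_vec n" unfolding y_def by (rule mult_mat_vec_carrier[OF pow_carrier_mat[OF H] x])
  define Y where "Y = (\<Sum>i<n. (cmod (y $ i))\<^sup>2)"
  have Y0: "Y \<ge> 0" unfolding Y_def by (simp add: sum_nonneg)
  have "H ^\<^sub>m (2 ^ Suc j) = H ^\<^sub>m m * H ^\<^sub>m m"
    unfolding m_def using pow_mat_add[OF H, of "2^j" "2^j"] by (simp add: mult_2)
  then have "H ^\<^sub>m (2 ^ Suc j) *\<^sub>v x = H ^\<^sub>m m *\<^sub>v y"
    unfolding y_def using H x by (simp add: assoc_mult_mat_vec[of _ n n _ n])
  then have "(H ^\<^sub>m (2 ^ Suc j) *\<^sub>v x) \<bullet>c x = y \<bullet>c (H ^\<^sub>m m *\<^sub>v x)"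
    using herm_adjoint_pow[OF H herm y x] by simp
  also have "\<dots> = complex_of_real Y" unfolding Y_def y_def[symmetric] by (rule cscalar_self[OF y])
  finally have eqY: "cmod ((H ^\<^sub>m (2 ^ Suc j) *\<^sub>v x) \<bullet>c x) = Y" using Y0 by simp
  have CS: "(cmod (y \<bullet>c x))\<^sup>2 \<le> Y * S0" unfolding Y_def S0(1) by (rule complex_CS[OF y x])
  have IH: "sqrt 2 ^ m * S0 \<le> cmod (y \<bullet>c x)" using Suc unfolding y_def m_def by simp
  have "(sqrt 2 ^ m * S0)\<^sup>2 \<le> (cmod (y \<bullet>c x))\<^sup>2"
    using IH S0(2) by (intro power_mono) auto
  with CS have "(sqrt 2 ^ m * S0)\<^sup>2 \<le> Y * S0" by linarith
  then have "(sqrt 2 ^ m)\<^sup>2 * S0 * S0 \<le> Y * S0" by (simp add: power2_eq_square algebra_simps)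
  then have "(sqrt 2 ^ m)\<^sup>2 * S0 \<le> Y" using S0(2) by simp
  moreover have "(sqrt 2 ^ m)\<^sup>2 = sqrt 2 ^ (2 ^ Suc j)"
    unfolding m_def by (simp add: power_mult[symmetric] mult.commute)
  ultimately show ?case using eqY by simp
qed

lemma power_growth_upper:
  fixes H :: "complex mat"
  assumes H: "H \<in> carrier_mat n n"
    and x: "x \<in> carrier_vec n"
    and bound: "\<And>i j. i < n \<Longrightarrow> j < n \<Longrightarrow> cmod ((H ^\<^sub>m k) $$ (i,j)) \<le> C"
  shows "cmod ((H ^\<^sub>m k *\<^sub>v x) \<bullet>c x) \<le> C * (\<Sum>i<n. \<Sum>j<n. cmod (x $ j) * cmod (x $ i))"
proof -
  have Hk: "H ^\<^sub>m k \<in> carrier_mat n n" using H by simp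
  have "(H ^\<^sub>m k *\<^sub>v x) \<bullet>c x = (\<Sum>i<n. (H ^\<^sub>m k *\<^sub>v x) $ i * cnj (x $ i))"
    using Hk x by (intro cscalar_sum) auto
  also have "\<dots> = (\<Sum>i<n. (\<Sum>j<n. (H ^\<^sub>m k) $$ (i,j) * x $ j) * cnj (x $ i))"
    using Hk x by (intro sum.cong refl, subst mult_mat_vec_sum[OF Hk x]) auto
  finally have eq: "(H ^\<^sub>m k *\<^sub>v x) \<bullet>c x = \<dots>" .
  have "cmod (\<Sum>i<n. (\<Sum>j<n. (H ^\<^sub>m k) $$ (i,j) * x $ j) * cnj (x $ i))
      \<le> (\<Sum>i<n. cmod ((\<Sum>j<n. (H ^\<^sub>m k) $$ (i,j) * x $ j) * cnj (x $ i)))"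
    by (rule norm_sum)
  also have "\<dots> \<le> (\<Sum>i<n. (\<Sum>j<n. C * cmod (x $ j)) * cmod (x $ i))"
  proof (rule sum_mono)
    fix i assume i: "i \<in> {..<n}"
    have "cmod (\<Sum>j<n. (H ^\<^sub>m k) $$ (i,j) * x $ j) \<le> (\<Sum>j<n. cmod ((H ^\<^sub>m k) $$ (i,j) * x $ j))"
      by (rule norm_sum)
    also have "\<dots> \<le> (\<Sum>j<n. C * cmod (x $ j))"
      using i by (intro sum_mono) (auto simp: norm_mult intro: mult_right_mono bound)
    finally have "cmod (\<Sum>j<n. (H ^\<^sub>m k) $$ (i,j) * x $ j) \<le> (\<Sum>j<n. C * cmod (x $ j))" .
    then show "cmod ((\<Sum>j<n. (H ^\<^sub>m k) $$ (i,j) * x $ j) * cnj (x $ i))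
      \<le> (\<Sum>j<n. C * cmod (x $ j)) * cmod (x $ i)"
      by (simp add: norm_mult mult_right_mono)
  qed
  also have "\<dots> = C * (\<Sum>i<n. \<Sum>j<n. cmod (x $ j) * cmod (x $ i))"
    by (simp add: sum_distrib_left sum_distrib_right mult.assoc)
  finally show ?thesis using eq by simp
qed


lemma spectral_bound:
  fixes H :: "complex mat"
  assumes H: "H \<in> carrier_mat n n" and n: "n > 0"
    and ev: "\<And>e. eigenvalue H e \<Longrightarrow> cmod e < sqrt 2"
  shows "\<exists>C r. 0 < r \<and> r < sqrt 2 \<and>
    (\<forall>k i j. i < n \<longrightarrow> j < n \<longrightarrow> cmod ((H ^\<^sub>m k) $$ (i,j)) \<le> C * r ^ k)"
proof -
  define sr where "sr = spectral_radius H"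
  obtain e0 where "e0 \<in> spectrum H" "sr = cmod e0"
    using spectral_radius_mem_max(1)[OF H n] unfolding sr_def by auto
  then have sr: "sr < sqrt 2" "sr \<ge> 0" using ev unfolding spectrum_def by auto
  define r where "r = (sr + sqrt 2) / 2"
  have r: "0 < r" "r < sqrt 2" "sr < r" using sr unfolding r_def by auto
  define B where "B = complex_of_real (1/r) \<cdot>\<^sub>m H"
  have B: "B \<in> carrier_mat n n" unfolding B_def using H by simp
  have "spectral_radius B < 1"
  proof -
    obtain l where l: "l \<in> spectrum B" "spectral_radius B = cmod l"
      using spectral_radius_mem_max(1)[OF B n] by auto
    then obtain v where v: "eigenvector B v l" unfolding spectrum_def eigenvalue_def by auto
    then have vc: "v \<in> carrier_vec n" and v0: "v \<noteq> 0\<^sub>v n" and Bv: "B *\<^sub>v v = l \<cdot>\<^sub>v v"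
      unfolding eigenvector_def using B by auto
    have "B *\<^sub>v v = complex_of_real (1/r) \<cdot>\<^sub>v (H *\<^sub>v v)"
      unfolding B_def by (rule smult_mat_vec[OF H vc])
    then have "complex_of_real r \<cdot>\<^sub>v (complex_of_real (1/r) \<cdot>\<^sub>v (H *\<^sub>v v)) = complex_of_real r \<cdot>\<^sub>v (l \<cdot>\<^sub>v v)"
      using Bv by simp
    then have "H *\<^sub>v v = (complex_of_real r * l) \<cdot>\<^sub>v v"
      using r(1) unfolding smult_smult_assoc by (simp flip: of_real_mult)
    then have "eigenvector H v (complex_of_real r * l)"
      unfolding eigenvector_def using H vc v0 by auto
    then have "eigenvalue H (complex_of_real r * l)" unfolding eigenvalue_def by auto
    then have "cmod (complex_of_real r * l) \<le> sr"
      using spectral_radius_mem_max(2)[OF H n] unfolding sr_def spectrum_def by auto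
    then have "r * cmod l \<le> sr" using r(1) by (simp add: norm_mult)
    then have "r * cmod l < r" using r by linarith
    then have "cmod l < 1" using r(1) by (metis mult.right_neutral mult_less_cancel_left_pos)
    then show ?thesis using l by simp
  qed
  from spectral_radius_jnf_norm_bound_less_1_upper_triangular[OF B this]
  obtain C where C: "\<And>k. norm_bound (B ^\<^sub>m k) C" by auto
  have "\<forall>k i j. i < n \<longrightarrow> j < n \<longrightarrow> cmod ((H ^\<^sub>m k) $$ (i,j)) \<le> C * r ^ k"
  proof (intro allI impI)
    fix k i j assume i: "i < n" and j: "j < n"
    have "B ^\<^sub>m k = complex_of_real (1/r) ^ k \<cdot>\<^sub>m (H ^\<^sub>m k)"
      unfolding B_def by (rule smult_pow_mat[OF H])
    then have "(B ^\<^sub>m k) $$ (i,j) = complex_of_real (1/r) ^ k * (H ^\<^sub>m k) $$ (i,j)"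
      using H i j by simp
    moreover have "cmod ((B ^\<^sub>m k) $$ (i,j)) \<le> C"
      using C[of k] i j B unfolding norm_bound_def by auto
    moreover have "cmod (1 / complex_of_real r) = 1 / r" using r(1) by (simp add: norm_divide)
    ultimately have "(1/r) ^ k * cmod ((H ^\<^sub>m k) $$ (i,j)) \<le> C"
      using r(1) by (simp add: norm_mult norm_power)
    then have "cmod ((H ^\<^sub>m k) $$ (i,j)) \<le> C * r ^ k"
      using r(1) by (simp add: field_simps)
    then show "cmod ((H ^\<^sub>m k) $$ (i,j)) \<le> C * r ^ k" .
  qed
  then show ?thesis using r by blast
qed

lemma rayleigh_contradiction:
  fixes H :: "complex mat"
  assumes H: "H \<in> carrier_mat n n" and n: "n > 0"
    and herm: "\<And>i j. i < n \<Longrightarrow> j < n \<Longrightarrow> H $$ (i,j) = cnj (H $$ (j,i))"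
    and ev: "\<And>e. eigenvalue H e \<Longrightarrow> cmod e < sqrt 2"
    and x: "x \<in> carrier_vec n"
    and S0: "S0 = (\<Sum>i<n. (cmod (x $ i))\<^sup>2)" "S0 > 0"
    and base: "cmod ((H *\<^sub>v x) \<bullet>c x) \<ge> sqrt 2 * S0"
  shows False
proof -
  obtain C r where r: "0 < r" "r < sqrt 2"
    and Cb: "\<And>k i j. i < n \<Longrightarrow> j < n \<Longrightarrow> cmod ((H ^\<^sub>m k) $$ (i,j)) \<le> C * r ^ k"
    using spectral_bound[OF H n ev] by blast
  define M0 where "M0 = (\<Sum>i<n. \<Sum>j<n. cmod (x $ j) * cmod (x $ i))"
  define q where "q = sqrt 2 / r"
  have q: "q > 1" unfolding q_def using r by simp
  have key: "q ^ (2^j) * S0 \<le> C * M0" for j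
  proof -
    let ?m = "2^j :: nat"
    have "sqrt 2 ^ ?m * S0 \<le> cmod ((H ^\<^sub>m ?m *\<^sub>v x) \<bullet>c x)"
      by (rule power_growth_lower[OF H herm x S0 base])
    also have "\<dots> \<le> C * r ^ ?m * M0"
      unfolding M0_def by (rule power_growth_upper[OF H x Cb])
    finally have "sqrt 2 ^ ?m * S0 \<le> C * r ^ ?m * M0" .
    moreover have "sqrt 2 ^ ?m = q ^ ?m * r ^ ?m"
      unfolding q_def using r by (simp add: power_divide)
    ultimately have "r ^ ?m * (q ^ ?m * S0) \<le> r ^ ?m * (C * M0)"
      by (simp add: algebra_simps)
    then show ?thesis using r(1) by (simp add: mult_le_cancel_left_pos)
  qed
  obtain N where N: "C * M0 / S0 < q ^ N" using real_arch_pow[OF q] by blast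
  have "q ^ N \<le> q ^ (2^N)"
    using q by (intro power_increasing) (auto intro: less_imp_le less_exp)
  with N have "C * M0 / S0 < q ^ (2^N)" by linarith
  then have "C * M0 < q ^ (2^N) * S0" using S0(2) by (simp add: divide_less_eq)
  with key[of N] show False by linarith
qed


definition nbr :: "(nat \<times> nat) set \<Rightarrow> nat \<Rightarrow> nat \<Rightarrow> bool" where
  "nbr A i j \<longleftrightarrow> (i, j) \<in> A \<or> (j, i) \<in> A"

lemma nbr_sym: "nbr A i j \<Longrightarrow> nbr A j i" unfolding nbr_def by auto

lemma nbr_range:
  assumes "digraph n A" "nbr A i j"
  shows "i < n" "j < n" "i \<noteq> j"
  using assms unfolding nbr_def digraph_def by auto

lemma herm_carrier: "herm_adj n A \<in> carrier_mat n n"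
  unfolding herm_adj_def by simp

lemma herm_index:
  "i < n \<Longrightarrow> j < n \<Longrightarrow> herm_adj n A $$ (i,j) =
     (if (i, j) \<in> A \<and> (j, i) \<in> A then 1
     else if (i, j) \<in> A then \<i>
     else if (j, i) \<in> A then - \<i>
     else 0)"
  unfolding herm_adj_def by simp

lemma herm_cnj: "i < n \<Longrightarrow> j < n \<Longrightarrow> herm_adj n A $$ (i,j) = cnj (herm_adj n A $$ (j,i))"
  by (simp add: herm_index)

lemma herm_zero: "i < n \<Longrightarrow> j < n \<Longrightarrow> \<not> nbr A i j \<Longrightarrow> herm_adj n A $$ (i,j) = 0"
  by (simp add: herm_index nbr_def)

lemma herm_unit: "i < n \<Longrightarrow> j < n \<Longrightarrow> nbr A i j \<Longrightarrow> herm_adj n A $$ (i,j) * herm_adj n A $$ (j,i) = 1"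
  by (auto simp: herm_index nbr_def)

lemma herm_unit': "i < n \<Longrightarrow> j < n \<Longrightarrow> nbr A i j \<Longrightarrow> herm_adj n A $$ (i,j) * cnj (herm_adj n A $$ (i,j)) = 1"
  using herm_unit[of i n j A] herm_cnj[of j n i A] by simp

lemma underlying_nbr: "(i, j) \<in> underlying_edges A \<longleftrightarrow> nbr A i j"
  unfolding underlying_edges_def nbr_def by auto

definition amo :: "(nat \<times> nat) set \<Rightarrow> bool" where
  "amo A \<longleftrightarrow> (\<forall>i j k. nbr A i j \<longrightarrow> nbr A i k \<longrightarrow> j = k)"

lemma row_single:
  assumes dg: "digraph n A" and am: "amo A" and nb: "nbr A i j0" and u: "u \<in> carrier_vec n"
  shows "(herm_adj n A *\<^sub>v u) $ i = herm_adj n A $$ (i,j0) * u $ j0"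
proof -
  have i: "i < n" and j0: "j0 < n" using nbr_range[OF dg nb] by auto
  have "(herm_adj n A *\<^sub>v u) $ i = (\<Sum>j<n. herm_adj n A $$ (i,j) * u $ j)"
    by (rule mult_mat_vec_sum[OF herm_carrier u i])
  also have "\<dots> = (\<Sum>j<n. if j = j0 then herm_adj n A $$ (i,j0) * u $ j0 else 0)"
  proof (rule sum.cong[OF refl])
    fix j assume j: "j \<in> {..<n}"
    show "herm_adj n A $$ (i,j) * u $ j = (if j = j0 then herm_adj n A $$ (i,j0) * u $ j0 else 0)"
    proof (cases "j = j0")
      case False
      then have nn: "\<not> nbr A i j" using am nb unfolding amo_def by blast
      have "j < n" using j by simp
      then show ?thesis using False herm_zero[OF i _ nn] by simp
    qed simp
  qed
  also have "\<dots> = herm_adj n A $$ (i,j0) * u $ j0" using j0 by simp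
  finally show ?thesis .
qed

lemma row_none:
  assumes "i < n" and none: "\<And>j. \<not> nbr A i j" and u: "u \<in> carrier_vec n"
  shows "(herm_adj n A *\<^sub>v u) $ i = 0"
proof -
  have "(herm_adj n A *\<^sub>v u) $ i = (\<Sum>j<n. herm_adj n A $$ (i,j) * u $ j)"
    by (rule mult_mat_vec_sum[OF herm_carrier u assms(1)])
  also have "\<dots> = 0" using herm_zero[OF assms(1) _ none] by simp
  finally show ?thesis .
qed

lemma herm_cube:
  assumes dg: "digraph n A" and am: "amo A" and v: "v \<in> carrier_vec n"
  shows "herm_adj n A *\<^sub>v (herm_adj n A *\<^sub>v (herm_adj n A *\<^sub>v v)) = herm_adj n A *\<^sub>v v"
proof (rule eq_vecI)
  let ?H = "herm_adj n A"
  have Hv: "?H *\<^sub>v v \<in> carrier_vec n" by (rule mult_mat_vec_carrier[OF herm_carrier v])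
  have HHv: "?H *\<^sub>v (?H *\<^sub>v v) \<in> carrier_vec n" by (rule mult_mat_vec_carrier[OF herm_carrier Hv])
  fix i assume "i < dim_vec (?H *\<^sub>v v)"
  then have i: "i < n" using herm_carrier[of n A] by simp
  show "(?H *\<^sub>v (?H *\<^sub>v (?H *\<^sub>v v))) $ i = (?H *\<^sub>v v) $ i"
  proof (cases "\<exists>j. nbr A i j")
    case False
    then have none: "\<And>j. \<not> nbr A i j" by blast
    show ?thesis unfolding row_none[OF i none HHv] row_none[OF i none v] ..
  next
    case True
    then obtain j0 where nb: "nbr A i j0" by blast
    have nb': "nbr A j0 i" using nbr_sym[OF nb] .
    have i': "i < n" and j0: "j0 < n" using nbr_range[OF dg nb] by auto
    have "(?H *\<^sub>v (?H *\<^sub>v (?H *\<^sub>v v))) $ i = ?H $$ (i,j0) * (?H *\<^sub>v (?H *\<^sub>v v)) $ j0"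
      by (rule row_single[OF dg am nb HHv])
    also have "(?H *\<^sub>v (?H *\<^sub>v v)) $ j0 = ?H $$ (j0,i) * (?H *\<^sub>v v) $ i"
      by (rule row_single[OF dg am nb' Hv])
    finally have "(?H *\<^sub>v (?H *\<^sub>v (?H *\<^sub>v v))) $ i = (?H $$ (i,j0) * ?H $$ (j0,i)) * (?H *\<^sub>v v) $ i"
      by (simp only: mult.assoc)
    then show ?thesis unfolding herm_unit[OF i j0 nb] by simp
  qed
qed (use herm_carrier[of n A] v in simp)

lemma amo_eigen:
  assumes dg: "digraph n A" and am: "amo A" and ev: "eigenvalue (herm_adj n A) e"
  shows "e \<in> complex_of_real ` {- 1 .. 1}"
proof -
  let ?H = "herm_adj n A"
  obtain v where "eigenvector ?H v e" using ev unfolding eigenvalue_def by auto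
  then have v: "v \<in> carrier_vec n" and v0: "v \<noteq> 0\<^sub>v n" and Hv: "?H *\<^sub>v v = e \<cdot>\<^sub>v v"
    unfolding eigenvector_def using herm_carrier[of n A] by auto
  have "?H *\<^sub>v (?H *\<^sub>v (?H *\<^sub>v v)) = (e * (e * e)) \<cdot>\<^sub>v v"
    using Hv v herm_carrier[of n A] by (simp add: mult_mat_vec smult_smult_assoc mult.assoc)
  then have eq: "(e * (e * e)) \<cdot>\<^sub>v v = e \<cdot>\<^sub>v v" using herm_cube[OF dg am v] Hv by simp
  have "\<exists>i<n. v $ i \<noteq> 0"
  proof (rule ccontr)
    assume "\<not> (\<exists>i<n. v $ i \<noteq> 0)"
    then have "v = 0\<^sub>v n" using v by (intro eq_vecI) auto
    with v0 show False by simp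
  qed
  then obtain i where i: "i < n" "v $ i \<noteq> 0" by blast
  have "((e * (e * e)) \<cdot>\<^sub>v v) $ i = (e \<cdot>\<^sub>v v) $ i" using eq by simp
  then have "e * (e * e) * v $ i = e * v $ i" using i v by simp
  then have "e * (e * e) = e" using i by simp
  then have "e * (e - 1) * (e + 1) = 0" by (simp add: algebra_simps)
  then have "e = 0 \<or> e - 1 = 0 \<or> e + 1 = 0" by simp
  then have "e = 0 \<or> e = 1 \<or> e = -1" by (auto simp: eq_neg_iff_add_eq_0)
  moreover have "complex_of_real 0 \<in> complex_of_real ` {- 1 .. 1}" by (rule imageI) simp
  moreover have "complex_of_real 1 \<in> complex_of_real ` {- 1 .. 1}" by (rule imageI) simp
  moreover have "complex_of_real (-1) \<in> complex_of_real ` {- 1 .. 1}" by (rule imageI) simp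
  ultimately show ?thesis by auto
qed


lemma good_amo:
  assumes dg: "digraph n A"
    and good: "\<forall>C\<in>weak_components n A. single_arc_or_digon_or_isolated C (induced_arcs A C)"
  shows "amo A"
  unfolding amo_def
proof (intro allI impI)
  fix i j k assume ij: "nbr A i j" and ik: "nbr A i k"
  have i: "i < n" and j: "j < n" "i \<noteq> j" using nbr_range[OF dg ij] by auto
  have k: "k < n" "i \<noteq> k" using nbr_range[OF dg ik] by auto
  define C where "C = {w \<in> {0..<n}. (i, w) \<in> (underlying_edges A)\<^sup>*}"
  have "C \<in> weak_components n A" unfolding weak_components_def C_def using i by auto
  with good have s: "single_arc_or_digon_or_isolated C (induced_arcs A C)" by blast
  have "i \<in> C" unfolding C_def using i by auto
  moreover have "j \<in> C" unfolding C_def using j ij underlying_nbr[of i j A] by auto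
  moreover have "k \<in> C" unfolding C_def using k ik underlying_nbr[of i k A] by auto
  ultimately show "j = k" using s j(2) k(2) unfolding single_arc_or_digon_or_isolated_def by auto
qed

lemma amo_good:
  assumes dg: "digraph n A" and am: "amo A" and C: "C \<in> weak_components n A"
  shows "single_arc_or_digon_or_isolated C (induced_arcs A C)"
proof -
  obtain v where v: "v < n" and Cdef: "C = {w \<in> {0..<n}. (v, w) \<in> (underlying_edges A)\<^sup>*}"
    using C unfolding weak_components_def by auto
  have reach: "w = v \<or> nbr A v w" if "(v, w) \<in> (underlying_edges A)\<^sup>*" for w
    using that
  proof (induct rule: rtrancl_induct)
    case base then show ?case by simp
  next
    case (step y z)
    have yz: "nbr A y z" using step(2) underlying_nbr by blast
    show ?case
    proof (cases "y = v")
      case True then show ?thesis using yz by simp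
    next
      case False
      then have "nbr A v y" using step(3) by simp
      then have "nbr A y v" by (rule nbr_sym)
      then have "v = z" using yz am unfolding amo_def by blast
      then show ?thesis by simp
    qed
  qed
  have noloop: "\<And>x. (x, x) \<notin> A" using dg unfolding digraph_def by auto
  have vC: "v \<in> C" unfolding Cdef using v by auto
  show ?thesis
  proof (cases "\<exists>j. nbr A v j")
    case False
    have "C \<subseteq> {v}"
    proof
      fix w assume "w \<in> C"
      then have "(v, w) \<in> (underlying_edges A)\<^sup>*" unfolding Cdef by blast
      then have "w = v \<or> nbr A v w" by (rule reach)
      then show "w \<in> {v}" using False by blast
    qed
    then have "C = {v}" using vC by blast
    moreover have "induced_arcs A C = {}" using noloop \<open>C = {v}\<close> unfolding induced_arcs_def by blast
    ultimately show ?thesis unfolding single_arc_or_digon_or_isolated_def by blast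
  next
    case True
    then obtain j where nb: "nbr A v j" by blast
    have j: "j < n" "v \<noteq> j" using nbr_range[OF dg nb] by auto
    have "C \<subseteq> {v, j}"
    proof
      fix w assume "w \<in> C"
      then have "(v, w) \<in> (underlying_edges A)\<^sup>*" unfolding Cdef by blast
      then have "w = v \<or> nbr A v w" by (rule reach)
      then show "w \<in> {v, j}" using nb am unfolding amo_def by blast
    qed
    moreover have "j \<in> C" unfolding Cdef using j nb underlying_nbr[of v j A] by auto
    ultimately have Ceq: "C = {v, j}" using vC by auto
    have IA: "induced_arcs A C = A \<inter> {(v, j), (j, v)}"
      unfolding induced_arcs_def Ceq using noloop by blast
    show ?thesis
    proof (cases "(v, j) \<in> A")
      case vj: True
      show ?thesis
      proof (cases "(j, v) \<in> A")
        case True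
        then have "induced_arcs A C = {(v, j), (j, v)}" using IA vj by auto
        then show ?thesis unfolding single_arc_or_digon_or_isolated_def
          by (intro disjI2 exI[of _ v] exI[of _ j]) (use Ceq j in simp)
      next
        case False
        then have ia: "induced_arcs A C = {(v, j)}" using IA vj by auto
        show ?thesis unfolding single_arc_or_digon_or_isolated_def
          by (rule disjI2, rule disjI1, intro exI[of _ v] exI[of _ j]) (use Ceq j ia in simp)
      qed
    next
      case False
      then have "(j, v) \<in> A" using nb unfolding nbr_def by auto
      then have ia: "induced_arcs A C = {(j, v)}" using IA False by auto
      have ce: "C = {j, v}" using Ceq by auto
      show ?thesis unfolding single_arc_or_digon_or_isolated_def
        by (rule disjI2, rule disjI1, intro exI[of _ j] exI[of _ v]) (use j ia ce in simp)
    qed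
  qed
qed


lemma sum_restrict:
  fixes f :: "nat \<Rightarrow> 'a :: comm_monoid_add"
  assumes "S \<subseteq> {..<n}" "\<And>i. i < n \<Longrightarrow> i \<notin> S \<Longrightarrow> f i = 0"
  shows "(\<Sum>i<n. f i) = (\<Sum>i\<in>S. f i)"
  by (rule sum.mono_neutral_right) (use assms in auto)

lemma big_eigen:
  assumes dg: "digraph n A" and nam: "\<not> amo A"
    and ev: "\<And>e. eigenvalue (herm_adj n A) e \<Longrightarrow> cmod e < sqrt 2"
  shows False
proof -
  let ?H = "herm_adj n A"
  obtain c a b where ca: "nbr A c a" and cb: "nbr A c b" and ab: "a \<noteq> b"
    using nam unfolding amo_def by blast
  have c: "c < n" and a: "a < n" "c \<noteq> a" using nbr_range[OF dg ca] by auto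
  have b: "b < n" "c \<noteq> b" using nbr_range[OF dg cb] by auto
  have noloop: "\<And>i. \<not> nbr A i i" using dg unfolding nbr_def digraph_def by auto
  define h1 where "h1 = ?H $$ (c, a)"
  define h2 where "h2 = ?H $$ (c, b)"
  define g where "g = ?H $$ (a, b)"
  define t where "t = g * h1 * cnj h2"
  define s :: real where "s = (if Re t \<ge> 0 then 1 else -1)"
  have s2: "s * s = 1" unfolding s_def by auto
  have sRe: "s * Re t \<ge> 0" unfolding s_def by auto
  have hh1: "h1 * cnj h1 = 1" unfolding h1_def by (rule herm_unit'[OF c a(1) ca])
  have hh2: "h2 * cnj h2 = 1" unfolding h2_def by (rule herm_unit'[OF c b(1) cb])
  have Hac: "?H $$ (a, c) = cnj h1" unfolding h1_def by (rule herm_cnj[OF a(1) c])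
  have Hbc: "?H $$ (b, c) = cnj h2" unfolding h2_def by (rule herm_cnj[OF b(1) c])
  have Hba: "?H $$ (b, a) = cnj g" unfolding g_def by (rule herm_cnj[OF b(1) a(1)])
  have Hcc: "?H $$ (c, c) = 0" by (rule herm_zero[OF c c noloop])
  have Haa: "?H $$ (a, a) = 0" by (rule herm_zero[OF a(1) a(1) noloop])
  have Hbb: "?H $$ (b, b) = 0" by (rule herm_zero[OF b(1) b(1) noloop])
  define xf where "xf = (\<lambda>i. if i = c then complex_of_real (sqrt 2)
      else if i = a then complex_of_real s * cnj h1
      else if i = b then complex_of_real s * cnj h2 else 0)"
  define x where "x = vec n xf"
  have x: "x \<in> carrier_vec n" unfolding x_def by simp
  have xi: "\<And>i. i < n \<Longrightarrow> x $ i = xf i" unfolding x_def by simp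
  define S where "S = {c, a, b}"
  have S: "S \<subseteq> {..<n}" unfolding S_def using a b c by auto
  have xz: "\<And>i. i \<notin> S \<Longrightarrow> xf i = 0" unfolding S_def xf_def by auto
  have xc: "xf c = complex_of_real (sqrt 2)" unfolding xf_def by simp
  have xa: "xf a = complex_of_real s * cnj h1" unfolding xf_def using a by simp
  have xb: "xf b = complex_of_real s * cnj h2" unfolding xf_def using b ab by simp
  have "(?H *\<^sub>v x) \<bullet>c x = (\<Sum>i<n. (?H *\<^sub>v x) $ i * cnj (x $ i))"
    by (rule cscalar_sum[OF mult_mat_vec_carrier[OF herm_carrier x] x])
  also have "\<dots> = (\<Sum>i<n. (\<Sum>j<n. ?H $$ (i,j) * x $ j) * cnj (x $ i))"
    by (intro sum.cong refl, subst mult_mat_vec_sum[OF herm_carrier x]) auto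
  also have "\<dots> = (\<Sum>i<n. (\<Sum>j\<in>S. ?H $$ (i,j) * xf j) * cnj (xf i))"
  proof (rule sum.cong[OF refl])
    fix i assume "i \<in> {..<n}"
    then have i: "i < n" by simp
    have "(\<Sum>j<n. ?H $$ (i,j) * x $ j) = (\<Sum>j\<in>S. ?H $$ (i,j) * x $ j)"
      by (rule sum_restrict[OF S]) (simp add: xi xz)
    also have "\<dots> = (\<Sum>j\<in>S. ?H $$ (i,j) * xf j)"
      using S by (intro sum.cong refl) (auto simp: xi)
    finally show "(\<Sum>j<n. ?H $$ (i,j) * x $ j) * cnj (x $ i) = (\<Sum>j\<in>S. ?H $$ (i,j) * xf j) * cnj (xf i)"
      using xi[OF i] by simp
  qed
  also have "\<dots> = (\<Sum>i\<in>S. (\<Sum>j\<in>S. ?H $$ (i,j) * xf j) * cnj (xf i))"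
    by (rule sum_restrict[OF S]) (simp add: xz)
  also have "\<dots> = complex_of_real (4 * s * sqrt 2 + 2 * Re t)"
  proof -
    have alg: "\<And>(h1::complex) h2 g S R. (h1 * (S * cnj h1) + h2 * (S * cnj h2)) * R +
        ((cnj h1 * R + g * (S * cnj h2)) * (S * h1) + (cnj h2 * R + cnj g * (S * cnj h1)) * (S * h2))
      = S * R * (2 * (h1 * cnj h1) + 2 * (h2 * cnj h2)) + S * S * (g * h1 * cnj h2 + cnj g * cnj h1 * h2)"
      by (simp add: algebra_simps)
    have ct: "g * h1 * cnj h2 + cnj g * cnj h1 * h2 = complex_of_real (2 * Re t)"
      unfolding t_def complex_add_cnj[symmetric] by simp
    have ss: "complex_of_real s * complex_of_real s = 1" using s2 by (simp flip: of_real_mult)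
    show ?thesis
      unfolding S_def using a b c ab
      by (simp add: xc xa xb Hac Hbc Hba Hcc Haa Hbb alg hh1 hh2 ct ss flip: h1_def h2_def g_def)
  qed
  finally have s1: "(?H *\<^sub>v x) \<bullet>c x = complex_of_real (4 * s * sqrt 2 + 2 * Re t)" .
  have abss: "\<bar>s\<bar> = 1" unfolding s_def by auto
  have n1: "(cmod h1)\<^sup>2 = 1"
    using complex_norm_square[of h1] hh1 by (metis of_real_eq_1_iff)
  have n2: "(cmod h2)\<^sup>2 = 1"
    using complex_norm_square[of h2] hh2 by (metis of_real_eq_1_iff)
  have "(\<Sum>i<n. (cmod (x $ i))\<^sup>2) = (\<Sum>i\<in>S. (cmod (x $ i))\<^sup>2)"
    by (rule sum_restrict[OF S]) (simp add: xi xz)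
  also have "\<dots> = (\<Sum>i\<in>S. (cmod (xf i))\<^sup>2)"
    using S by (intro sum.cong refl) (auto simp: xi)
  also have "\<dots> = 4"
    unfolding S_def using a b c ab
    by (simp add: xc xa xb norm_mult power_mult_distrib abss n1 n2)
  finally have S0: "(\<Sum>i<n. (cmod (x $ i))\<^sup>2) = 4" .
  define r where "r = 4 * s * sqrt 2 + 2 * Re t"
  have "s * r = 4 * (s * s) * sqrt 2 + 2 * (s * Re t)" unfolding r_def by (simp add: algebra_simps)
  then have "s * r \<ge> 4 * sqrt 2" using s2 sRe by simp
  moreover have "s * r \<le> \<bar>r\<bar>"
    using abss by (metis abs_ge_self abs_mult mult_1)
  ultimately have "\<bar>r\<bar> \<ge> sqrt 2 * 4" by simp
  then have base: "cmod ((?H *\<^sub>v x) \<bullet>c x) \<ge> sqrt 2 * 4"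
    unfolding s1 r_def[symmetric] by simp
  have n: "n > 0" using c by simp
  show False
    by (rule rayleigh_contradiction[OF herm_carrier n herm_cnj ev x S0[symmetric] _ base]) auto
qed


theorem theorem9p2:
  fixes n :: nat and A :: "(nat \<times> nat) set"
  assumes "digraph n A"
  shows "((\<forall>e. eigenvalue (herm_adj n A) e \<longrightarrow>
              e \<in> complex_of_real ` {- sqrt 2 <..< sqrt 2})
          \<longleftrightarrow> (\<forall>e. eigenvalue (herm_adj n A) e \<longrightarrow>
              e \<in> complex_of_real ` {- 1 .. 1}))
       \<and> ((\<forall>e. eigenvalue (herm_adj n A) e \<longrightarrow>
              e \<in> complex_of_real ` {- 1 .. 1})
          \<longleftrightarrow> (\<forall>C \<in> weak_components n A.
                 single_arc_or_digon_or_isolated C (induced_arcs A C)))"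
proof -
  have s2: "1 < sqrt (2::real)" by simp
  have ba: "e \<in> complex_of_real ` {- sqrt 2 <..< sqrt 2}"
    if ein: "e \<in> complex_of_real ` {- 1 .. 1}" for e
  proof -
    obtain y where y: "e = complex_of_real y" "- 1 \<le> y" "y \<le> 1" using ein by auto
    have "- sqrt 2 < y" "y < sqrt 2" using s2 y by linarith+
    then have "y \<in> {- sqrt 2 <..< sqrt 2}" by simp
    then show ?thesis using y(1) by blast
  qed
  have a_amo: "amo A" if a: "\<forall>e. eigenvalue (herm_adj n A) e \<longrightarrow>
              e \<in> complex_of_real ` {- sqrt 2 <..< sqrt 2}"
  proof (rule ccontr)
    assume "\<not> amo A"
    moreover have "cmod e < sqrt 2" if ev: "eigenvalue (herm_adj n A) e" for e
    proof -
      obtain y where "e = complex_of_real y" "- sqrt 2 < y" "y < sqrt 2" using a ev by auto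
      then show ?thesis by simp
    qed
    ultimately show False using big_eigen[OF assms] by blast
  qed
  have amo_b: "\<forall>e. eigenvalue (herm_adj n A) e \<longrightarrow> e \<in> complex_of_real ` {- 1 .. 1}"
    if "amo A" using amo_eigen[OF assms that] by blast
  have amo_c: "\<forall>C \<in> weak_components n A. single_arc_or_digon_or_isolated C (induced_arcs A C)"
    if "amo A" using amo_good[OF assms that] by blast
  have c_amo: "amo A"
    if "\<forall>C \<in> weak_components n A. single_arc_or_digon_or_isolated C (induced_arcs A C)"
    using good_amo[OF assms that] .
  show ?thesis using ba a_amo amo_b amo_c c_amo by blast
qed

end
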